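(* Let $n\ge 4$ and let $\sigma=(1\,2)(n-1\,\,n)\in S_n$. Then every associative (not necessarily unital) algebra $A$ over a field satisfying the identity $x_1\cdots x_n=x_{\sigma(1)}\cdots x_{\sigma(n)}$ is eventually commutative of degree $2n-3$, but such an algebra need not be eventually commutative of any degree less than $2n-3$.
   Context: An algebra $A$ satisfies an identity $x_1\cdots x_m=x_{\tau(1)}\cdots x_{\tau(m)}$ (with $\tau\in S_m$) if $a_1\cdots a_m=a_{\tau(1)}\cdots a_{\tau(m)}$ for all $a_1,\dots,a_m\in A$. The algebra $A$ is eventually commutative of degree $k$ if it satisfies $x_1\cdots x_k=x_{\tau(1)}\cdots x_{\tau(k)}$ for every $\tau\in S_k$. *)

theory Defs
  imports "HOL-Combinatorics.Permutations" "HOL-Combinatorics.Transposition"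
begin

definition is_assoc_algebra ::
  "'a set \<Rightarrow> ('a \<Rightarrow> 'a \<Rightarrow> 'a) \<Rightarrow> 'a \<Rightarrow> ('k::field \<Rightarrow> 'a \<Rightarrow> 'a) \<Rightarrow> ('a \<Rightarrow> 'a \<Rightarrow> 'a) \<Rightarrow> bool"
where
  "is_assoc_algebra A add zero sc mul \<longleftrightarrow>
     zero \<in> A \<and>
     (\<forall>a\<in>A. \<forall>b\<in>A. add a b \<in> A \<and> mul a b \<in> A) \<and>
     (\<forall>c. \<forall>a\<in>A. sc c a \<in> A) \<and>
     (\<forall>a\<in>A. \<forall>b\<in>A. \<forall>d\<in>A. add (add a b) d = add a (add b d)) \<and>
     (\<forall>a\<in>A. \<forall>b\<in>A. add a b = add b a) \<and>
     (\<forall>a\<in>A. add zero a = a) \<and>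
     (\<forall>a\<in>A. \<exists>b\<in>A. add a b = zero) \<and>
     (\<forall>c. \<forall>a\<in>A. \<forall>b\<in>A. sc c (add a b) = add (sc c a) (sc c b)) \<and>
     (\<forall>c d. \<forall>a\<in>A. sc (c + d) a = add (sc c a) (sc d a)) \<and>
     (\<forall>c d. \<forall>a\<in>A. sc (c * d) a = sc c (sc d a)) \<and>
     (\<forall>a\<in>A. sc 1 a = a) \<and>
     (\<forall>a\<in>A. \<forall>b\<in>A. \<forall>d\<in>A. mul (mul a b) d = mul a (mul b d)) \<and>
     (\<forall>a\<in>A. \<forall>b\<in>A. \<forall>d\<in>A. mul a (add b d) = add (mul a b) (mul a d)) \<and>
     (\<forall>a\<in>A. \<forall>b\<in>A. \<forall>d\<in>A. mul (add a b) d = add (mul a d) (mul b d)) \<and>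
     (\<forall>c. \<forall>a\<in>A. \<forall>b\<in>A. sc c (mul a b) = mul (sc c a) b \<and> sc c (mul a b) = mul a (sc c b))"

fun lprod :: "('a \<Rightarrow> 'a \<Rightarrow> 'a) \<Rightarrow> 'a list \<Rightarrow> 'a" where
  "lprod mul [] = undefined"
| "lprod mul [x] = x"
| "lprod mul (x # y # ys) = mul x (lprod mul (y # ys))"

definition satisfies_identity :: "'a set \<Rightarrow> ('a \<Rightarrow> 'a \<Rightarrow> 'a) \<Rightarrow> nat \<Rightarrow> (nat \<Rightarrow> nat) \<Rightarrow> bool" where
  "satisfies_identity A mul m \<tau> \<longleftrightarrow>
     (\<forall>a. (\<forall>i\<in>{1..m}. a i \<in> A) \<longrightarrow>
        lprod mul (map a [1..<m+1]) = lprod mul (map (\<lambda>i. a (\<tau> i)) [1..<m+1]))"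

definition eventually_commutative :: "'a set \<Rightarrow> ('a \<Rightarrow> 'a \<Rightarrow> 'a) \<Rightarrow> nat \<Rightarrow> bool" where
  "eventually_commutative A mul k \<longleftrightarrow>
     (\<forall>\<tau>. \<tau> permutes {1..k} \<longrightarrow> satisfies_identity A mul k \<tau>)"

definition sigma_perm :: "nat \<Rightarrow> nat \<Rightarrow> nat" where
  "sigma_perm n = transpose 1 2 \<circ> transpose (n - 1) n"

end

theory Submission
  imports Defs "HOL-Computational_Algebra.Formal_Power_Series" "HOL-Library.Nat_Bijection"
begin

locale sg =
  fixes A :: "'a set" and mul :: "'a \<Rightarrow> 'a \<Rightarrow> 'a"
  assumes cl: "a \<in> A \<Longrightarrow> b \<in> A \<Longrightarrow> mul a b \<in> A"
    and asc: "a \<in> A \<Longrightarrow> b \<in> A \<Longrightarrow> c \<in> A \<Longrightarrow> mul (mul a b) c = mul a (mul b c)"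
begin

abbreviation P where "P xs \<equiv> lprod mul xs"

lemma P_Cons: "xs \<noteq> [] \<Longrightarrow> P (x # xs) = mul x (P xs)"
  by (cases xs) auto

lemma P_in: "xs \<noteq> [] \<Longrightarrow> set xs \<subseteq> A \<Longrightarrow> P xs \<in> A"
proof (induction xs)
  case Nil then show ?case by simp
next
  case (Cons x xs)
  then show ?case by (cases "xs = []") (auto simp: P_Cons intro: cl)
qed

lemma P_app: "xs \<noteq> [] \<Longrightarrow> ys \<noteq> [] \<Longrightarrow> set xs \<subseteq> A \<Longrightarrow> set ys \<subseteq> A
  \<Longrightarrow> P (xs @ ys) = mul (P xs) (P ys)"
proof (induction xs)
  case Nil then show ?case by simp
next
  case (Cons x xs)
  show ?case
  proof (cases "xs = []")
    case True then show ?thesis using Cons by (simp add: P_Cons)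
  next
    case False
    then have "P ((x # xs) @ ys) = mul x (mul (P xs) (P ys))"
      using Cons by (simp add: P_Cons)
    also have "\<dots> = mul (mul x (P xs)) (P ys)"
      using Cons False by (simp add: asc P_in)
    finally show ?thesis using False by (simp add: P_Cons)
  qed
qed

lemma P_flat: "M \<noteq> [] \<Longrightarrow> set L \<subseteq> A \<Longrightarrow> set M \<subseteq> A \<Longrightarrow> set R \<subseteq> A
  \<Longrightarrow> P (L @ M @ R) = P (L @ P M # R)"
proof -
  assume h: "M \<noteq> []" "set L \<subseteq> A" "set M \<subseteq> A" "set R \<subseteq> A"
  have MR: "P (M @ R) = P (P M # R)"
  proof (cases "R = []")
    case True then show ?thesis by simp
  next
    case False
    then show ?thesis using h by (simp add: P_app P_Cons)
  qed
  show ?thesis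
  proof (cases "L = []")
    case True then show ?thesis using MR by simp
  next
    case False
    have "P (L @ (M @ R)) = mul (P L) (P (M @ R))" using h False by (simp add: P_app)
    moreover have "P (L @ (P M # R)) = mul (P L) (P (P M # R))"
      using h False P_in[of M] by (subst P_app) auto
    ultimately show ?thesis using MR by simp
  qed
qed

lemma P_ctx: "P M = P M' \<Longrightarrow> M \<noteq> [] \<Longrightarrow> M' \<noteq> [] \<Longrightarrow> set L \<subseteq> A \<Longrightarrow> set M \<subseteq> A
  \<Longrightarrow> set M' \<subseteq> A \<Longrightarrow> set R \<subseteq> A \<Longrightarrow> P (L @ M @ R) = P (L @ M' @ R)"
  using P_flat[of M L R] P_flat[of M' L R] by simp

end

lemma len3: "3 \<le> length D \<Longrightarrow> \<exists>a b c E. D = a # b # c # E"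
  by (metis Suc_le_length_iff numeral_3_eq_3)

lemma len2: "length D = 2 \<Longrightarrow> \<exists>a b. D = [a, b]"
  by (auto simp: length_Suc_conv numeral_2_eq_2)


lemma upt_split3: "1 \<le> i \<Longrightarrow> i < k \<Longrightarrow> [1..<k+1] = [1..<i] @ i # Suc i # [Suc (Suc i)..<k+1]"
proof -
  assume h: "1 \<le> i" "i < k"
  have "[1..<i + (k + 1 - i)] = [1..<i] @ [i..<i + (k + 1 - i)]"
    by (rule upt_add_eq_append) (use h in simp)
  moreover have "i + (k + 1 - i) = k + 1" using h by simp
  ultimately have "[1..<k+1] = [1..<i] @ [i..<k+1]" by simp
  also have "[i..<k+1] = i # Suc i # [Suc (Suc i)..<k+1]"
    using h by (simp add: upt_conv_Cons del: upt.simps)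
  finally show ?thesis .
qed

lemma sig_split: "4 \<le> n \<Longrightarrow> [1..<n+1] = 1 # 2 # [3..<n-1] @ [n-1, n]"
proof -
  assume h: "4 \<le> n"
  have "[1..<n+1] = [1..<n] @ [n]" using h by simp
  moreover have "[1..<n] = [1..<n-1] @ [n-1]" using h upt_Suc_append[of 1 "n-1"] by simp
  moreover have a: "[1..<n-1] = 1 # [Suc 1..<n-1]" by (rule upt_conv_Cons) (use h in simp)
  moreover have b: "[Suc 1..<n-1] = Suc 1 # [Suc (Suc 1)..<n-1]" by (rule upt_conv_Cons) (use h in simp)
  moreover have c: "Suc 1 = 2" "Suc (Suc 1) = (3::nat)" by simp_all
  ultimately show ?thesis by (simp only: a b c) simp
qed

lemma sig_vals:
  assumes "4 \<le> n"
  shows "sigma_perm n 1 = 2" "sigma_perm n 2 = 1" "sigma_perm n (n-1) = n" "sigma_perm n n = n - 1"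
    "3 \<le> i \<Longrightarrow> i < n - 1 \<Longrightarrow> sigma_perm n i = i"
  using assms by (auto simp: sigma_perm_def transpose_def)

lemma map_sig: "4 \<le> n \<Longrightarrow>
  map (\<lambda>i. f (sigma_perm n i)) [1..<n+1] = f 2 # f 1 # map f [3..<n-1] @ [f n, f (n-1)]"
proof -
  assume h: "4 \<le> n"
  have "map (\<lambda>i. f (sigma_perm n i)) [3..<n-1] = map f [3..<n-1]"
    by (rule map_cong) (auto simp: sig_vals[OF h])
  then show ?thesis unfolding sig_split[OF h] using sig_vals[OF h] by simp
qed

lemma map_nth_shift: "map (\<lambda>i. xs ! (i - 1)) [1..<length xs + 1] = xs"
proof -
  have "[1..<length xs + 1] = map Suc [0..<length xs]" by (simp add: map_Suc_upt del: upt.simps)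
  then show ?thesis by (simp add: map_nth o_def del: upt.simps)
qed

lemma sat_BI:
  assumes sat: "satisfies_identity A mul n (sigma_perm n)" and n4: "4 \<le> n"
    and "a \<in> A" "b \<in> A" "c \<in> A" "d \<in> A" "set us \<subseteq> A" "length us = n - 4"
  shows "lprod mul (a # b # us @ [c, d]) = lprod mul (b # a # us @ [d, c])"
proof -
  define xs where "xs = a # b # us @ [c, d]"
  define f where "f i = xs ! (i - 1)" for i
  have lx: "length xs = n" using assms by (simp add: xs_def)
  have mf: "map f [1..<n+1] = xs" unfolding f_def using map_nth_shift[of xs] lx by simp
  have fA: "\<forall>i\<in>{1..n}. f i \<in> A"
  proof
    fix i assume "i \<in> {1..n}"
    then have "i - 1 < length xs" using lx by auto
    then have "xs ! (i - 1) \<in> set xs" by simp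
    then show "f i \<in> A" using assms by (auto simp: f_def xs_def)
  qed
  have "xs = f 1 # f 2 # map f [3..<n-1] @ [f (n-1), f n]"
    using mf sig_split[OF n4] by simp
  then have e: "a = f 1" "b = f 2" "us @ [c, d] = map f [3..<n-1] @ [f (n-1), f n]"
    by (auto simp: xs_def)
  have "length (map f [3..<n-1]) = length us" using assms by simp
  then have e2: "us = map f [3..<n-1]" "c = f (n-1)" "d = f n" using e(3) by auto
  have "lprod mul (map f [1..<n+1]) = lprod mul (map (\<lambda>i. f (sigma_perm n i)) [1..<n+1])"
    using sat fA unfolding satisfies_identity_def by blast
  then show ?thesis using mf map_sig[OF n4, of f] e e2 by (simp add: xs_def)
qed

lemma BI_sat:
  assumes n4: "4 \<le> n"
    and BI: "\<And>a b c d us. a \<in> A \<Longrightarrow> b \<in> A \<Longrightarrow> c \<in> A \<Longrightarrow> d \<in> A \<Longrightarrow> set us \<subseteq> A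
       \<Longrightarrow> length us = n - 4 \<Longrightarrow> lprod mul (a # b # us @ [c, d]) = lprod mul (b # a # us @ [d, c])"
  shows "satisfies_identity A mul n (sigma_perm n)"
  unfolding satisfies_identity_def
proof (intro allI impI)
  fix f assume fA: "\<forall>i\<in>{1..n}. f i \<in> A"
  have s: "set (map f [3..<n-1]) \<subseteq> A" using fA by auto
  have "lprod mul (f 1 # f 2 # map f [3..<n-1] @ [f (n-1), f n])
      = lprod mul (f 2 # f 1 # map f [3..<n-1] @ [f n, f (n-1)])"
    by (rule BI) (use fA n4 s in auto)
  then show "lprod mul (map f [1..<n + 1]) = lprod mul (map (\<lambda>i. f (sigma_perm n i)) [1..<n + 1])"
    unfolding sig_split[OF n4] map_sig[OF n4, of f, unfolded sig_split[OF n4]] by simp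
qed

locale sgid = sg +
  fixes n :: nat
  assumes n4: "4 \<le> n"
    and BI: "\<And>a b c d us. a \<in> A \<Longrightarrow> b \<in> A \<Longrightarrow> c \<in> A \<Longrightarrow> d \<in> A \<Longrightarrow> set us \<subseteq> A
       \<Longrightarrow> length us = n - 4 \<Longrightarrow> P (a # b # us @ [c, d]) = P (b # a # us @ [d, c])"
begin

lemma stepA:
  assumes "x \<in> A" "y \<in> A" "t1 \<in> A" "t2 \<in> A" "t3 \<in> A" "set us \<subseteq> A" "length us = n - 4"
  shows "P (x # y # us @ [t1, t2, t3]) = P (y # x # us @ [t1, t2, t3])"
proof -
  note fl = P_flat[of "[_, _]" _ "[]", simplified]
  have "P (x # y # us @ [t1, t2, t3]) = P (x # y # us @ [t1, mul t2 t3])"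
    using fl[of "x # y # us @ [t1]" t2 t3] assms by simp
  also have "\<dots> = P (y # x # us @ [mul t2 t3, t1])"
    using BI assms cl by simp
  also have "\<dots> = P (y # x # us @ [t2, t3, t1])"
    using P_flat[of "[t2,t3]" "y # x # us" "[t1]"] assms by simp
  also have "\<dots> = P (y # x # us @ [t2, mul t3 t1])"
    using fl[of "y # x # us @ [t2]" t3 t1] assms by simp
  also have "\<dots> = P (x # y # us @ [mul t3 t1, t2])"
    using BI assms cl by simp
  also have "\<dots> = P (x # y # us @ [t3, t1, t2])"
    using P_flat[of "[t3,t1]" "x # y # us" "[t2]"] assms by simp
  also have "\<dots> = P (x # y # us @ [t3, mul t1 t2])"
    using fl[of "x # y # us @ [t3]" t1 t2] assms by simp
  also have "\<dots> = P (y # x # us @ [mul t1 t2, t3])"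
    using BI assms cl by simp
  also have "\<dots> = P (y # x # us @ [t1, t2, t3])"
    using P_flat[of "[t1,t2]" "y # x # us" "[t3]"] assms by simp
  finally show ?thesis .
qed

lemma stepB:
  assumes "x \<in> A" "y \<in> A" "t1 \<in> A" "t2 \<in> A" "t3 \<in> A" "set us \<subseteq> A" "length us = n - 4"
  shows "P (t1 # t2 # t3 # us @ [x, y]) = P (t1 # t2 # t3 # us @ [y, x])"
proof -
  have "P (t1 # t2 # t3 # us @ [x, y]) = P (t1 # mul t2 t3 # us @ [x, y])"
    using P_flat[of "[t2,t3]" "[t1]" "us @ [x,y]"] assms by simp
  also have "\<dots> = P (mul t2 t3 # t1 # us @ [y, x])"
    using BI assms cl by simp
  also have "\<dots> = P (t2 # t3 # t1 # us @ [y, x])"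
    using P_flat[of "[t2,t3]" "[]" "t1 # us @ [y,x]"] assms by simp
  also have "\<dots> = P (t2 # mul t3 t1 # us @ [y, x])"
    using P_flat[of "[t3,t1]" "[t2]" "us @ [y,x]"] assms by simp
  also have "\<dots> = P (mul t3 t1 # t2 # us @ [x, y])"
    using BI assms cl by simp
  also have "\<dots> = P (t3 # t1 # t2 # us @ [x, y])"
    using P_flat[of "[t3,t1]" "[]" "t2 # us @ [x,y]"] assms by simp
  also have "\<dots> = P (t3 # mul t1 t2 # us @ [x, y])"
    using P_flat[of "[t1,t2]" "[t3]" "us @ [x,y]"] assms by simp
  also have "\<dots> = P (mul t1 t2 # t3 # us @ [y, x])"
    using BI assms cl by simp
  also have "\<dots> = P (t1 # t2 # t3 # us @ [y, x])"
    using P_flat[of "[t1,t2]" "[]" "t3 # us @ [y,x]"] assms by simp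
  finally show ?thesis .
qed

lemma SWa:
  assumes "x \<in> A" "y \<in> A" "set L \<subseteq> A" "set R \<subseteq> A" "n - 1 \<le> length R"
  shows "P (L @ x # y # R) = P (L @ y # x # R)"
proof -
  define us where "us = take (n - 4) R"
  have l: "length us = n - 4" using assms n4 by (simp add: us_def)
  have "3 \<le> length (drop (n - 4) R)" using assms n4 by simp
  then obtain t1 t2 t3 R2 where D: "drop (n - 4) R = t1 # t2 # t3 # R2" using len3 by blast
  have R: "R = us @ [t1, t2, t3] @ R2" using D us_def by (metis append_Cons append_Nil append_take_drop_id)
  have s: "set us \<subseteq> A" "t1 \<in> A" "t2 \<in> A" "t3 \<in> A" "set R2 \<subseteq> A" using assms(4) R by auto
  have "P (x # y # us @ [t1, t2, t3]) = P (y # x # us @ [t1, t2, t3])"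
    using stepA[OF assms(1,2) s(2,3,4,1) l] .
  then have "P (L @ (x # y # us @ [t1, t2, t3]) @ R2) = P (L @ (y # x # us @ [t1, t2, t3]) @ R2)"
    using P_ctx[of "x # y # us @ [t1, t2, t3]" "y # x # us @ [t1, t2, t3]" L R2] s assms by simp
  then show ?thesis using R by simp
qed

lemma SWb:
  assumes "x \<in> A" "y \<in> A" "set L \<subseteq> A" "set R \<subseteq> A" "n - 1 \<le> length L"
  shows "P (L @ x # y # R) = P (L @ y # x # R)"
proof -
  define L2 where "L2 = take (length L - (n - 1)) L"
  define D where "D = drop (length L - (n - 1)) L"
  have LD: "L = L2 @ D" by (simp add: L2_def D_def)
  have lD: "length D = n - 1" using assms n4 by (simp add: D_def)
  then have "3 \<le> length D" using n4 by simp
  then obtain t1 t2 t3 us where D: "D = t1 # t2 # t3 # us" using len3 by blast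
  have l: "length us = n - 4" using lD D by simp
  have s: "set us \<subseteq> A" "t1 \<in> A" "t2 \<in> A" "t3 \<in> A" "set L2 \<subseteq> A" using assms(3) LD D by auto
  have "P (t1 # t2 # t3 # us @ [x, y]) = P (t1 # t2 # t3 # us @ [y, x])"
    using stepB[OF assms(1,2) s(2,3,4,1) l] .
  then have "P (L2 @ (t1 # t2 # t3 # us @ [x, y]) @ R) = P (L2 @ (t1 # t2 # t3 # us @ [y, x]) @ R)"
    using P_ctx[of "t1 # t2 # t3 # us @ [x, y]" "t1 # t2 # t3 # us @ [y, x]" L2 R] s assms by simp
  then show ?thesis using LD D by simp
qed

lemma SW:
  assumes "x \<in> A" "y \<in> A" "set L \<subseteq> A" "set R \<subseteq> A" "length L + length R = 2 * n - 5"
  shows "P (L @ x # y # R) = P (L @ y # x # R)"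
proof -
  consider "n - 1 \<le> length R" | "n - 1 \<le> length L" | "length L = n - 2" "length R = n - 3"
    | "length L = n - 3" "length R = n - 2" using assms(5) n4 by linarith
  then show ?thesis
  proof cases
    case 1 then show ?thesis using SWa assms by blast
  next
    case 2 then show ?thesis using SWb assms by blast
  next
    case 3
    have "2 \<le> length L" using 3 n4 by simp
    then obtain l1 l2 M where L: "L = l1 # l2 # M"
      by (metis Suc_le_length_iff numeral_2_eq_2)
    have lM: "length M = n - 4" using 3 L by simp
    have R0: "R \<noteq> []" using 3 n4 by auto
    have s: "l1 \<in> A" "l2 \<in> A" "set M \<subseteq> A" using L assms by auto
    have PyR: "P (y # R) \<in> A" using P_in[of "y # R"] assms by simp
    have "P (L @ x # y # R) = P (l1 # l2 # M @ [x, P (y # R)])"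
      using P_flat[of "y # R" "l1 # l2 # M @ [x]" "[]"] assms L by simp
    also have "\<dots> = P (l2 # l1 # M @ [P (y # R), x])"
      using BI[OF s(1,2) assms(1) PyR s(3) lM] .
    also have "\<dots> = P (l2 # l1 # M @ y # R @ [x])"
      using P_flat[of "y # R" "l2 # l1 # M" "[x]"] assms s by simp
    also have "\<dots> = P ([] @ l1 # l2 # (M @ y # R @ [x]))"
      using SWa[of l2 l1 "[]" "M @ y # R @ [x]"] s assms 3 n4 by simp
    also have "\<dots> = P ((L @ [y]) @ [P R, x])"
      using P_flat[of R "L @ [y]" "[x]"] assms s R0 L by simp
    also have "\<dots> = P ((L @ [y]) @ [x, P R])"
    proof -
      have "3 \<le> length (L @ [y])" using 3 n4 by simp
      then obtain t1 t2 t3 us where D: "L @ [y] = t1 # t2 # t3 # us" using len3 by blast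
      have "length (t1 # t2 # t3 # us) = n - 1" unfolding D[symmetric] using 3 n4 by simp
      then have l: "length us = n - 4" by simp
      have "set (t1 # t2 # t3 # us) \<subseteq> A" unfolding D[symmetric] using assms by simp
      then have ss: "t1 \<in> A" "t2 \<in> A" "t3 \<in> A" "set us \<subseteq> A" by auto
      have PR: "P R \<in> A" using P_in R0 assms by blast
      show ?thesis using stepB[OF PR assms(1) ss(1,2,3,4) l] D by simp
    qed
    also have "\<dots> = P (L @ y # x # R)"
      using P_flat[of R "L @ [y, x]" "[]"] assms s R0 by simp
    finally show ?thesis .
  next
    case 4
    have "2 \<le> length R" using 4 n4 by simp
    then obtain M r1 r2 where R: "R = M @ [r1, r2]"
    proof -
      have "R = take (length R - 2) R @ drop (length R - 2) R" by simp
      moreover have "length (drop (length R - 2) R) = 2" using \<open>2 \<le> length R\<close> by simp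
      moreover obtain r1 r2 where "drop (length R - 2) R = [r1, r2]"
        using len2[OF \<open>length (drop (length R - 2) R) = 2\<close>] by blast
      ultimately show ?thesis using that by metis
    qed
    have lM: "length M = n - 4" using 4 R by simp
    have L0: "L \<noteq> []" using 4 n4 by auto
    have s: "r1 \<in> A" "r2 \<in> A" "set M \<subseteq> A" using R assms by auto
    have PLx: "P (L @ [x]) \<in> A" using P_in[of "L @ [x]"] assms by simp
    have "P (L @ x # y # R) = P (P (L @ [x]) # y # M @ [r1, r2])"
      using P_flat[of "L @ [x]" "[]" "y # M @ [r1, r2]"] assms R by simp
    also have "\<dots> = P (y # P (L @ [x]) # M @ [r2, r1])"
      using BI[OF PLx assms(2) s(1,2,3) lM] .
    also have "\<dots> = P (y # L @ x # M @ [r2, r1])"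
      using P_flat[of "L @ [x]" "[y]" "M @ [r2, r1]"] assms s by simp
    also have "\<dots> = P ((y # L @ x # M) @ r1 # r2 # [])"
      using SWb[of r2 r1 "y # L @ x # M" "[]"] s assms 4 n4 by simp
    also have "\<dots> = P (y # L @ x # R)" using R by simp
    also have "\<dots> = P (y # P L # x # R)"
      using P_flat[of L "[y]" "x # R"] assms L0 by simp
    also have "\<dots> = P (P L # y # x # R)"
    proof -
      have "3 \<le> length (x # R)" using 4 n4 by simp
      have "x # R = x # M @ [r1, r2]" using R by simp
      have "P L \<in> A" using P_in L0 assms by blast
      obtain us t1 t2 t3 where D: "x # R = us @ [t1, t2, t3]" "length us = n - 4"
      proof -
        have "2 \<le> length R" using 4 n4 by simp
        have "x # R = (x # M) @ [r1, r2]" using R by simp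
        have "n - 4 \<le> length M" using lM by simp
        show ?thesis
        proof (cases M rule: rev_cases)
          case Nil
          then show ?thesis using that[of "[]" x r1 r2] R lM n4 by simp
        next
          case (snoc M1 m)
          then show ?thesis using that[of "x # M1" m r1 r2] R lM n4 by simp
        qed
      qed
      have "set (us @ [t1, t2, t3]) \<subseteq> A" unfolding D(1)[symmetric] using assms by simp
      then have ss: "t1 \<in> A" "t2 \<in> A" "t3 \<in> A" "set us \<subseteq> A" by auto
      show ?thesis using stepA[OF assms(2) \<open>P L \<in> A\<close> ss(1,2,3,4) D(2)] D(1) by simp
    qed
    also have "\<dots> = P (L @ y # x # R)"
      using P_flat[of L "[]" "y # x # R"] assms L0 by simp
    finally show ?thesis .
  qed
qed

definition good where
  "good k \<tau> \<longleftrightarrow> (\<forall>x. (\<forall>i\<in>{1..k}. x i \<in> A) \<longrightarrow>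
     P (map x [1..<k+1]) = P (map (\<lambda>i. x (\<tau> i)) [1..<k+1]))"

lemma good_comp:
  assumes "good k \<rho>" "good k \<tau>" "\<forall>j\<in>{1..k}. \<rho> j \<in> {1..k}"
  shows "good k (\<rho> \<circ> \<tau>)"
  unfolding good_def
proof (intro allI impI)
  fix x assume xA: "\<forall>i\<in>{1..k}. x i \<in> A"
  have "P (map x [1..<k+1]) = P (map (\<lambda>i. x (\<rho> i)) [1..<k+1])"
    using assms(1) xA unfolding good_def by blast
  also have "\<dots> = P (map (\<lambda>i. x (\<rho> (\<tau> i))) [1..<k+1])"
  proof -
    have "\<And>i. i\<in>{1..k} \<Longrightarrow> x (\<rho> i) \<in> A" using xA assms(3) by blast
    from assms(2)[unfolded good_def, rule_format, of "\<lambda>i. x (\<rho> i)", OF this] show ?thesis .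
  qed
  finally show "P (map x [1..<k+1]) = P (map (\<lambda>i. x ((\<rho> \<circ> \<tau>) i)) [1..<k+1])" by simp
qed

lemma good_adj:
  assumes "1 \<le> i" "i < 2 * n - 3"
  shows "good (2 * n - 3) (transpose i (Suc i))"
  unfolding good_def
proof (intro allI impI)
  let ?k = "2 * n - 3"
  fix x assume xA: "\<forall>j\<in>{1..?k}. x j \<in> A"
  have sp: "[1..<?k+1] = [1..<i] @ i # Suc i # [Suc (Suc i)..<?k+1]"
    using upt_split3 assms by blast
  have m1: "map (\<lambda>j. x (transpose i (Suc i) j)) [1..<i] = map x [1..<i]"
    by (rule map_cong) auto
  have m2: "map (\<lambda>j. x (transpose i (Suc i) j)) [Suc (Suc i)..<?k+1] = map x [Suc (Suc i)..<?k+1]"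
    by (rule map_cong) auto
  have "P (map x [1..<i] @ x i # x (Suc i) # map x [Suc (Suc i)..<?k+1])
      = P (map x [1..<i] @ x (Suc i) # x i # map x [Suc (Suc i)..<?k+1])"
    by (rule SW) (use xA assms n4 in auto)
  then show "P (map x [1..<?k+1]) = P (map (\<lambda>j. x (transpose i (Suc i) j)) [1..<?k+1])"
    unfolding sp map_append list.map m1 m2 by (simp del: upt.simps)
qed

lemma transp_range: "a \<in> {1..k} \<Longrightarrow> b \<in> {1..k} \<Longrightarrow> \<forall>j\<in>{1..k}. transpose a b j \<in> {1..k}"
  by (auto simp: transpose_def)

lemma good_transp:
  "1 \<le> a \<Longrightarrow> a < b \<Longrightarrow> b \<le> 2 * n - 3 \<Longrightarrow> good (2 * n - 3) (transpose a b)"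
proof (induction b arbitrary: a)
  case 0 then show ?case by simp
next
  case (Suc b)
  show ?case
  proof (cases "a = b")
    case True then show ?thesis using good_adj Suc by simp
  next
    case False
    then have ab: "a < b" using Suc by simp
    have e: "transpose a (Suc b) = transpose b (Suc b) \<circ> transpose a b \<circ> transpose b (Suc b)"
      using ab by (auto simp: fun_eq_iff transpose_def)
    have g1: "good (2 * n - 3) (transpose b (Suc b))" using good_adj Suc ab by simp
    have g2: "good (2 * n - 3) (transpose a b)" using Suc.IH[of a] Suc ab by simp
    have "good (2 * n - 3) (transpose a b \<circ> transpose b (Suc b))"
      by (rule good_comp[OF g2 g1]) (rule transp_range, use Suc ab in auto)
    then have "good (2 * n - 3) (transpose b (Suc b) \<circ> (transpose a b \<circ> transpose b (Suc b)))"
      by (rule good_comp[OF g1]) (rule transp_range, use Suc ab in auto)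
    then show ?thesis unfolding e by (simp only: o_assoc)
  qed
qed

lemma evc: "eventually_commutative A mul (2 * n - 3)"
  unfolding eventually_commutative_def
proof (intro allI impI)
  fix \<tau> assume tp: "\<tau> permutes {1..2 * n - 3}"
  have "good (2 * n - 3) \<tau>"
    using tp finite_atLeastAtMost[of 1 "2 * n - 3"]
  proof (induction rule: permutes_induct)
    case id then show ?case by (simp add: good_def)
  next
    case (swap a b p)
    have gt: "good (2 * n - 3) (transpose a b)"
    proof (cases "a < b")
      case True then show ?thesis using good_transp swap by auto
    next
      case False
      then have "b < a" using swap by simp
      then show ?thesis using good_transp[of b a] swap by (auto simp: transpose_commute)
    qed
    show ?case by (rule good_comp[OF gt swap.IH]) (rule transp_range, use swap in auto)
  qed
  then show "satisfies_identity A mul (2 * n - 3) \<tau>"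
    by (simp add: good_def satisfies_identity_def)
qed

end

unbundle fps_syntax

definition act :: "nat \<Rightarrow> 'k::field fps \<Rightarrow> (nat \<Rightarrow> nat \<Rightarrow> 'k) \<Rightarrow> nat \<Rightarrow> nat \<Rightarrow> 'k" where
  "act T f \<phi> = (\<lambda>a b. \<Sum>i\<le>T. f $ i * \<phi> (a + i) b)"

definition ract :: "nat \<Rightarrow> 'k::field fps \<Rightarrow> (nat \<Rightarrow> nat \<Rightarrow> 'k) \<Rightarrow> nat \<Rightarrow> nat \<Rightarrow> 'k" where
  "ract T f \<phi> = (\<lambda>a b. \<Sum>j\<le>T. f $ j * \<phi> a (b + j))"

definition supp :: "nat \<Rightarrow> (nat \<Rightarrow> nat \<Rightarrow> 'k::field) \<Rightarrow> bool" where
  "supp T \<phi> \<longleftrightarrow> (\<forall>a b. T < a + b \<longrightarrow> \<phi> a b = 0)"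

definition Mset :: "nat \<Rightarrow> nat \<Rightarrow> (nat \<Rightarrow> nat \<Rightarrow> 'k::field) set" where
  "Mset N T = {\<phi>. supp T \<phi> \<and> (\<forall>a b. N \<le> a \<or> N \<le> b \<longrightarrow> \<phi> (Suc a) b = \<phi> a (Suc b))}"

definition ordge :: "'k::field fps \<Rightarrow> nat \<Rightarrow> bool" where
  "ordge f m \<longleftrightarrow> (\<forall>i<m. f $ i = 0)"

lemma act_add2: "act T f (\<lambda>a b. \<phi> a b + \<psi> a b) = (\<lambda>a b. act T f \<phi> a b + act T f \<psi> a b)"
  by (simp add: act_def distrib_left sum.distrib)
lemma ract_add2: "ract T f (\<lambda>a b. \<phi> a b + \<psi> a b) = (\<lambda>a b. ract T f \<phi> a b + ract T f \<psi> a b)"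
  by (simp add: ract_def distrib_left sum.distrib)
lemma act_add1: "act T (f + g) \<phi> = (\<lambda>a b. act T f \<phi> a b + act T g \<phi> a b)"
  by (simp add: act_def distrib_right sum.distrib)
lemma ract_add1: "ract T (f + g) \<phi> = (\<lambda>a b. ract T f \<phi> a b + ract T g \<phi> a b)"
  by (simp add: ract_def distrib_right sum.distrib)
lemma fps_const_mult_nth: "(fps_const (c::'k::field) * f) $ n = c * f $ n"
  by (simp add: fps_const_mult_left)
lemma act_sc1: "act T (fps_const c * f) \<phi> = (\<lambda>a b. c * act T f \<phi> a b)"
  by (simp add: act_def fps_const_mult_nth sum_distrib_left mult.assoc)
lemma ract_sc1: "ract T (fps_const c * f) \<phi> = (\<lambda>a b. c * ract T f \<phi> a b)"
  by (simp add: ract_def fps_const_mult_nth sum_distrib_left mult.assoc)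
lemma act_sc2: "act T f (\<lambda>a b. c * \<phi> a b) = (\<lambda>a b. c * act T f \<phi> a b)"
  by (simp add: act_def sum_distrib_left mult.left_commute)
lemma ract_sc2: "ract T f (\<lambda>a b. c * \<phi> a b) = (\<lambda>a b. c * ract T f \<phi> a b)"
  by (simp add: ract_def sum_distrib_left mult.left_commute)
lemma act_zero1[simp]: "act T 0 \<phi> = (\<lambda>a b. 0)"
  by (simp add: act_def)
lemma ract_zero1[simp]: "ract T 0 \<phi> = (\<lambda>a b. 0)"
  by (simp add: ract_def)
lemma act_zero2[simp]: "act T f (\<lambda>a b. 0) = (\<lambda>a b. 0)"
  by (simp add: act_def)
lemma ract_zero2[simp]: "ract T f (\<lambda>a b. 0) = (\<lambda>a b. 0)"
  by (simp add: ract_def)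
lemma act_one[simp]: "act T 1 \<phi> = \<phi>"
  by (simp add: act_def fun_eq_iff mult_delta_left sum.delta)
lemma ract_one[simp]: "ract T 1 \<phi> = \<phi>"
  by (simp add: ract_def fun_eq_iff mult_delta_left sum.delta)

lemma act_supp: "supp T \<phi> \<Longrightarrow> supp T (act T f \<phi>)"
  by (simp add: supp_def act_def)
lemma ract_supp: "supp T \<phi> \<Longrightarrow> supp T (ract T f \<phi>)"
  by (simp add: supp_def ract_def)

lemma act_ract_comm: "act T f (ract T g \<phi>) = ract T g (act T f \<phi>)"
proof (intro ext)
  fix a b
  have "act T f (ract T g \<phi>) a b = (\<Sum>i\<le>T. \<Sum>j\<le>T. f $ i * (g $ j * \<phi> (a + i) (b + j)))"
    by (simp add: act_def ract_def sum_distrib_left)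
  also have "\<dots> = (\<Sum>j\<le>T. \<Sum>i\<le>T. f $ i * (g $ j * \<phi> (a + i) (b + j)))"
    by (rule sum.swap)
  also have "\<dots> = ract T g (act T f \<phi>) a b"
    by (simp add: act_def ract_def sum_distrib_left mult.left_commute)
  finally show "act T f (ract T g \<phi>) a b = ract T g (act T f \<phi>) a b" .
qed

lemma act_hom_pt:
  assumes "supp T \<phi>"
  shows "act T (f * g) \<phi> a b = act T f (act T g \<phi>) a b"
proof -
  define F where "F i j = f $ i * (g $ j * \<phi> (a + i + j) b)" for i j
  have "act T f (act T g \<phi>) a b = (\<Sum>i\<le>T. \<Sum>j\<le>T. F i j)"
    by (simp add: act_def F_def sum_distrib_left add.assoc)
  also have "\<dots> = (\<Sum>(i,j)\<in>{..T} \<times> {..T}. F i j)"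
    by (simp add: sum.cartesian_product)
  also have "\<dots> = (\<Sum>(i,j)\<in>{(i,j). i + j \<le> T}. F i j)"
  proof (rule sum.mono_neutral_right)
    show "finite ({..T} \<times> {..T})" by simp
    show "{(i, j). i + j \<le> T} \<subseteq> {..T} \<times> {..T}" by auto
    show "\<forall>x\<in>{..T} \<times> {..T} - {(i, j). i + j \<le> T}. (case x of (i, j) \<Rightarrow> F i j) = 0"
    proof
      fix x assume "x \<in> {..T} \<times> {..T} - {(i, j). i + j \<le> T}"
      then obtain i j where x: "x = (i, j)" "T < i + j" by auto
      then have "T < (a + i + j) + b" "T < a + (b + i + j)" by simp_all
      then show "(case x of (i, j) \<Rightarrow> F i j) = 0"
        using assms x by (simp add: F_def supp_def)
    qed
  qed
  also have "\<dots> = (\<Sum>k\<le>T. \<Sum>i\<le>k. F i (k - i))"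
    by (rule sum.triangle_reindex_eq)
  also have "\<dots> = (\<Sum>k\<le>T. (f * g) $ k * \<phi> (a + k) b)"
  proof (rule sum.cong[OF refl])
    fix k assume "k \<in> {..T}"
    have "(\<Sum>i\<le>k. F i (k - i)) = (\<Sum>i\<le>k. f $ i * g $ (k - i) * \<phi> (a + k) b)"
      by (rule sum.cong) (auto simp: F_def mult.assoc)
    also have "\<dots> = (f * g) $ k * \<phi> (a + k) b"
      by (simp add: fps_mult_nth sum_distrib_right atLeast0AtMost)
    finally show "(\<Sum>i\<le>k. F i (k - i)) = (f * g) $ k * \<phi> (a + k) b" .
  qed
  finally show ?thesis by (simp add: act_def)
qed

lemma act_hom: "supp T \<phi> \<Longrightarrow> act T (f * g) \<phi> = act T f (act T g \<phi>)"
  using act_hom_pt by blast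

lemma ract_hom_pt:
  assumes "supp T \<phi>"
  shows "ract T (f * g) \<phi> a b = ract T f (ract T g \<phi>) a b"
proof -
  define F where "F i j = f $ i * (g $ j * \<phi> a (b + i + j))" for i j
  have "ract T f (ract T g \<phi>) a b = (\<Sum>i\<le>T. \<Sum>j\<le>T. F i j)"
    by (simp add: ract_def F_def sum_distrib_left add.assoc)
  also have "\<dots> = (\<Sum>(i,j)\<in>{..T} \<times> {..T}. F i j)"
    by (simp add: sum.cartesian_product)
  also have "\<dots> = (\<Sum>(i,j)\<in>{(i,j). i + j \<le> T}. F i j)"
  proof (rule sum.mono_neutral_right)
    show "finite ({..T} \<times> {..T})" by simp
    show "{(i, j). i + j \<le> T} \<subseteq> {..T} \<times> {..T}" by auto
    show "\<forall>x\<in>{..T} \<times> {..T} - {(i, j). i + j \<le> T}. (case x of (i, j) \<Rightarrow> F i j) = 0"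
    proof
      fix x assume "x \<in> {..T} \<times> {..T} - {(i, j). i + j \<le> T}"
      then obtain i j where x: "x = (i, j)" "T < i + j" by auto
      then have "T < (a + i + j) + b" "T < a + (b + i + j)" by simp_all
      then show "(case x of (i, j) \<Rightarrow> F i j) = 0"
        using assms x by (simp add: F_def supp_def)
    qed
  qed
  also have "\<dots> = (\<Sum>k\<le>T. \<Sum>i\<le>k. F i (k - i))"
    by (rule sum.triangle_reindex_eq)
  also have "\<dots> = (\<Sum>k\<le>T. (f * g) $ k * \<phi> a (b + k))"
  proof (rule sum.cong[OF refl])
    fix k assume "k \<in> {..T}"
    have "(\<Sum>i\<le>k. F i (k - i)) = (\<Sum>i\<le>k. f $ i * g $ (k - i) * \<phi> a (b + k))"
      by (rule sum.cong) (auto simp: F_def mult.assoc)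
    also have "\<dots> = (f * g) $ k * \<phi> a (b + k)"
      by (simp add: fps_mult_nth sum_distrib_right atLeast0AtMost)
    finally show "(\<Sum>i\<le>k. F i (k - i)) = (f * g) $ k * \<phi> a (b + k)" .
  qed
  finally show ?thesis by (simp add: ract_def)
qed

lemma ract_hom: "supp T \<phi> \<Longrightarrow> ract T (f * g) \<phi> = ract T f (ract T g \<phi>)"
  using ract_hom_pt by blast

lemma act_eq_ract: "(\<And>a b i. \<psi> (a + i) b = \<psi> a (b + i)) \<Longrightarrow> act T f \<psi> = ract T f \<psi>"
  by (simp add: act_def ract_def)

lemma M_shift1: "\<phi> \<in> Mset N T \<Longrightarrow> N \<le> b \<Longrightarrow> \<phi> (a + i) b = \<phi> a (b + i)"
proof (induction i arbitrary: b)
  case 0 then show ?case by simp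
next
  case (Suc i)
  have "\<phi> (a + Suc i) b = \<phi> (Suc (a + i)) b" by simp
  also have "\<dots> = \<phi> (a + i) (Suc b)" using Suc.prems by (simp add: Mset_def)
  also have "\<dots> = \<phi> a (Suc b + i)" using Suc by simp
  finally show ?case by simp
qed

lemma M_shift2: "\<phi> \<in> Mset N T \<Longrightarrow> N \<le> a \<Longrightarrow> \<phi> a (b + i) = \<phi> (a + i) b"
proof (induction i arbitrary: a)
  case 0 then show ?case by simp
next
  case (Suc i)
  have "\<phi> a (b + Suc i) = \<phi> a (Suc (b + i))" by simp
  also have "\<dots> = \<phi> (Suc a) (b + i)" using Suc.prems by (simp add: Mset_def)
  also have "\<dots> = \<phi> (Suc a + i) b" using Suc by simp
  finally show ?case by simp
qed

lemma ract_sym: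
  assumes "\<phi> \<in> Mset N T" "ordge P N"
  shows "ract T P \<phi> (a + i) b = ract T P \<phi> a (b + i)"
  unfolding ract_def
proof (rule sum.cong[OF refl])
  fix j assume "j \<in> {..T}"
  show "P $ j * \<phi> (a + i) (b + j) = P $ j * \<phi> a (b + i + j)"
  proof (cases "j < N")
    case True then show ?thesis using assms(2) by (simp add: ordge_def)
  next
    case False
    then have "\<phi> (a + i) (b + j) = \<phi> a (b + j + i)" using M_shift1[OF assms(1)] by simp
    then show ?thesis by (simp add: ac_simps)
  qed
qed

lemma act_sym:
  assumes "\<phi> \<in> Mset N T" "ordge Q N"
  shows "act T Q \<phi> (a + i) b = act T Q \<phi> a (b + i)"
  unfolding act_def
proof (rule sum.cong[OF refl])
  fix j assume "j \<in> {..T}"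
  show "Q $ j * \<phi> (a + i + j) b = Q $ j * \<phi> (a + j) (b + i)"
  proof (cases "j < N")
    case True then show ?thesis using assms(2) by (simp add: ordge_def)
  next
    case False
    then have "\<phi> (a + j) (b + i) = \<phi> (a + j + i) b" using M_shift2[OF assms(1)] by simp
    then show ?thesis by (simp add: ac_simps)
  qed
qed

lemma Mset_supp: "\<phi> \<in> Mset N T \<Longrightarrow> supp T \<phi>"
  by (simp add: Mset_def)

lemma Rel1:
  assumes "\<phi> \<in> Mset N T" "ordge P N"
  shows "act T l (ract T P \<phi>) = ract T (l * P) \<phi>"
proof -
  have "act T l (ract T P \<phi>) = ract T l (ract T P \<phi>)"
    by (rule act_eq_ract) (rule ract_sym[OF assms])
  also have "\<dots> = ract T (l * P) \<phi>"
    using ract_hom[OF Mset_supp[OF assms(1)]] by simp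
  finally show ?thesis .
qed

lemma Rel2:
  assumes "\<phi> \<in> Mset N T" "ordge Q N"
  shows "act T Q (ract T l \<phi>) = act T (Q * l) \<phi>"
proof -
  have "act T Q (ract T l \<phi>) = ract T l (act T Q \<phi>)" by (rule act_ract_comm)
  also have "\<dots> = act T l (act T Q \<phi>)"
    by (rule act_eq_ract[symmetric]) (rule act_sym[OF assms])
  also have "\<dots> = act T (l * Q) \<phi>"
    using act_hom[OF Mset_supp[OF assms(1)]] by simp
  finally show ?thesis by (simp add: mult.commute)
qed

lemma act_M: "\<phi> \<in> Mset N T \<Longrightarrow> act T f \<phi> \<in> Mset N T"
  unfolding Mset_def
proof (intro CollectI conjI allI impI)
  assume h: "\<phi> \<in> {\<phi>. supp T \<phi> \<and> (\<forall>a b. N \<le> a \<or> N \<le> b \<longrightarrow> \<phi> (Suc a) b = \<phi> a (Suc b))}"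
  then show "supp T (act T f \<phi>)" by (simp add: act_supp)
  fix a b assume "N \<le> a \<or> N \<le> b"
  then show "act T f \<phi> (Suc a) b = act T f \<phi> a (Suc b)"
    using h by (auto simp: act_def intro!: sum.cong)
qed

lemma ract_M: "\<phi> \<in> Mset N T \<Longrightarrow> ract T f \<phi> \<in> Mset N T"
  unfolding Mset_def
proof (intro CollectI conjI allI impI)
  assume h: "\<phi> \<in> {\<phi>. supp T \<phi> \<and> (\<forall>a b. N \<le> a \<or> N \<le> b \<longrightarrow> \<phi> (Suc a) b = \<phi> a (Suc b))}"
  then show "supp T (ract T f \<phi>)" by (simp add: ract_supp)
  fix a b assume "N \<le> a \<or> N \<le> b"
  then show "ract T f \<phi> (Suc a) b = ract T f \<phi> a (Suc b)"
    using h by (auto simp: ract_def intro!: sum.cong)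
qed

lemma add_M: "\<phi> \<in> Mset N T \<Longrightarrow> \<psi> \<in> Mset N T \<Longrightarrow> (\<lambda>a b. \<phi> a b + \<psi> a b) \<in> Mset N T"
  by (simp add: Mset_def supp_def)

lemma sc_M: "\<phi> \<in> Mset N T \<Longrightarrow> (\<lambda>a b. c * \<phi> a b) \<in> Mset N T"
  by (simp add: Mset_def supp_def)

lemma neg_M: "\<phi> \<in> Mset N T \<Longrightarrow> (\<lambda>a b. - \<phi> a b) \<in> Mset N T"
  by (simp add: Mset_def supp_def)

lemma zero_M: "(\<lambda>a b. 0) \<in> Mset N T"
  by (simp add: Mset_def supp_def)

lemma ordge_mult: "ordge f p \<Longrightarrow> ordge g q \<Longrightarrow> ordge (f * g) (p + q)"
  unfolding ordge_def fps_mult_nth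
proof (intro allI impI)
  fix k assume h: "\<forall>i<p. f $ i = 0" "\<forall>i<q. g $ i = 0" "k < p + q"
  show "(\<Sum>i = 0..k. f $ i * g $ (k - i)) = 0"
  proof (rule sum.neutral, intro ballI)
    fix i assume ik: "i \<in> {0..k}"
    show "f $ i * g $ (k - i) = 0"
    proof (cases "i < p")
      case True then show ?thesis using h by simp
    next
      case False then have "k - i < q" using h(3) ik by auto
      then show ?thesis using h(2) by simp
    qed
  qed
qed

definition fpart :: "(nat \<Rightarrow> 'k::field) \<Rightarrow> 'k fps" where
  "fpart e = Abs_fps (\<lambda>i. e (2 * i))"
definition mpart :: "(nat \<Rightarrow> 'k::field) \<Rightarrow> nat \<Rightarrow> nat \<Rightarrow> 'k" where
  "mpart e = (\<lambda>a b. e (Suc (2 * prod_encode (a, b))))"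
definition mk :: "'k::field fps \<Rightarrow> (nat \<Rightarrow> nat \<Rightarrow> 'k) \<Rightarrow> nat \<Rightarrow> 'k" where
  "mk f \<phi> = (\<lambda>k. if even k then f $ (k div 2)
      else \<phi> (fst (prod_decode (k div 2))) (snd (prod_decode (k div 2))))"

lemma fpart_mk[simp]: "fpart (mk f \<phi>) = f"
  by (simp add: fpart_def mk_def fps_nth_inverse)
lemma mpart_mk[simp]: "mpart (mk f \<phi>) = \<phi>"
  by (simp add: mpart_def mk_def)
lemma mk_parts: "mk (fpart e) (mpart e) = e"
proof
  fix k
  show "mk (fpart e) (mpart e) k = e k"
  proof (cases "even k")
    case True then show ?thesis by (simp add: mk_def fpart_def)
  next
    case False
    then have "Suc (2 * (k div 2)) = k" by presburger
    then show ?thesis using False by (simp add: mk_def mpart_def)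
  qed
qed
lemma ext_parts: "fpart e = fpart e' \<Longrightarrow> mpart e = mpart e' \<Longrightarrow> e = e'"
  by (metis mk_parts)
lemma fpart_nth0: "fpart e $ 0 = e 0"
  by (simp add: fpart_def)

definition Acar :: "nat \<Rightarrow> (nat \<Rightarrow> 'k::field) set" where
  "Acar n = {e. e 0 = 0 \<and> mpart e \<in> Mset (n - 2) (2 * (n - 2))}"
definition Aadd :: "(nat \<Rightarrow> 'k::field) \<Rightarrow> (nat \<Rightarrow> 'k) \<Rightarrow> nat \<Rightarrow> 'k" where
  "Aadd e e' = (\<lambda>k. e k + e' k)"
definition Azero :: "nat \<Rightarrow> 'k::field" where
  "Azero = (\<lambda>k. 0)"
definition Asc :: "'k::field \<Rightarrow> (nat \<Rightarrow> 'k) \<Rightarrow> nat \<Rightarrow> 'k" where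
  "Asc c e = (\<lambda>k. c * e k)"
definition Amul :: "nat \<Rightarrow> (nat \<Rightarrow> 'k::field) \<Rightarrow> (nat \<Rightarrow> 'k) \<Rightarrow> nat \<Rightarrow> 'k" where
  "Amul n e e' = mk (fpart e * fpart e')
     (\<lambda>a b. act (2 * (n - 2)) (fpart e) (mpart e') a b + ract (2 * (n - 2)) (fpart e') (mpart e) a b)"

lemma fpart_Aadd[simp]: "fpart (Aadd e e') = fpart e + fpart e'"
  by (rule fps_ext) (simp add: fpart_def Aadd_def)
lemma mpart_Aadd[simp]: "mpart (Aadd e e') = (\<lambda>a b. mpart e a b + mpart e' a b)"
  by (simp add: mpart_def Aadd_def)
lemma fpart_Asc[simp]: "fpart (Asc c e) = fps_const c * fpart e"
  by (rule fps_ext) (simp add: fpart_def Asc_def fps_const_mult_nth)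
lemma mpart_Asc[simp]: "mpart (Asc c e) = (\<lambda>a b. c * mpart e a b)"
  by (simp add: mpart_def Asc_def)
lemma fpart_Azero[simp]: "fpart Azero = 0"
  by (rule fps_ext) (simp add: fpart_def Azero_def)
lemma mpart_Azero[simp]: "mpart Azero = (\<lambda>a b. 0)"
  by (simp add: mpart_def Azero_def)
lemma fpart_Amul[simp]: "fpart (Amul n e e') = fpart e * fpart e'"
  by (simp add: Amul_def)
lemma mpart_Amul[simp]: "mpart (Amul n e e') =
   (\<lambda>a b. act (2 * (n - 2)) (fpart e) (mpart e') a b + ract (2 * (n - 2)) (fpart e') (mpart e) a b)"
  by (simp add: Amul_def)

lemma Acar_iff: "e \<in> Acar n \<longleftrightarrow> fpart e $ 0 = 0 \<and> mpart e \<in> Mset (n - 2) (2 * (n - 2))"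
  by (simp add: Acar_def fpart_nth0)

lemma Amul_in: "e \<in> Acar n \<Longrightarrow> e' \<in> Acar n \<Longrightarrow> Amul n e e' \<in> Acar n"
  unfolding Acar_iff by (simp add: fps_mult_nth add_M act_M ract_M)

lemma Amul_assoc:
  assumes "e1 \<in> Acar n" "e2 \<in> Acar n" "e3 \<in> Acar n"
  shows "Amul n (Amul n e1 e2) e3 = Amul n e1 (Amul n e2 e3)"
proof (rule ext_parts)
  show "fpart (Amul n (Amul n e1 e2) e3) = fpart (Amul n e1 (Amul n e2 e3))"
    by (simp add: mult.assoc)
  let ?T = "2 * (n - 2)"
  have s1: "supp ?T (mpart e1)" "supp ?T (mpart e3)"
    using assms by (auto simp: Acar_iff Mset_def)
  have 1: "act ?T (fpart e1 * fpart e2) (mpart e3) = act ?T (fpart e1) (act ?T (fpart e2) (mpart e3))"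
    by (rule act_hom[OF s1(2)])
  have 2: "ract ?T (fpart e3) (act ?T (fpart e1) (mpart e2)) = act ?T (fpart e1) (ract ?T (fpart e3) (mpart e2))"
    by (rule act_ract_comm[symmetric])
  have 3: "ract ?T (fpart e3) (ract ?T (fpart e2) (mpart e1)) = ract ?T (fpart e2 * fpart e3) (mpart e1)"
    using ract_hom[OF s1(1), of "fpart e3" "fpart e2"] by (simp add: mult.commute)
  show "mpart (Amul n (Amul n e1 e2) e3) = mpart (Amul n e1 (Amul n e2 e3))"
    by (simp add: act_add2 ract_add2 1 2 3 add.assoc)
qed

lemma Amul_distL:
  "Amul n e1 (Aadd e2 e3) = Aadd (Amul n e1 e2) (Amul n e1 e3)"
  by (rule ext_parts) (simp_all add: distrib_left act_add2 ract_add1 add_ac)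

lemma Amul_distR:
  "Amul n (Aadd e1 e2) e3 = Aadd (Amul n e1 e3) (Amul n e2 e3)"
  by (rule ext_parts) (simp_all add: distrib_right act_add1 ract_add2 add_ac)

lemma Amul_sc:
  "Asc c (Amul n e1 e2) = Amul n (Asc c e1) e2 \<and> Asc c (Amul n e1 e2) = Amul n e1 (Asc c e2)"
  by (intro conjI; rule ext_parts)
     (simp_all add: act_sc1 act_sc2 ract_sc1 ract_sc2 distrib_left mult.assoc mult.left_commute)

lemma Acar_alg: "is_assoc_algebra (Acar n :: (nat \<Rightarrow> 'k::field) set) Aadd Azero Asc (Amul n)"
  unfolding is_assoc_algebra_def
proof (intro conjI ballI allI)
  show "Azero \<in> Acar n" by (simp add: Acar_iff zero_M)
next
  fix a b :: "nat \<Rightarrow> 'k" assume "a \<in> Acar n" "b \<in> Acar n"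
  then show "Aadd a b \<in> Acar n" by (simp add: Acar_iff add_M)
next
  fix a b :: "nat \<Rightarrow> 'k" assume "a \<in> Acar n" "b \<in> Acar n"
  then show "Amul n a b \<in> Acar n" by (rule Amul_in)
next
  fix c and a :: "nat \<Rightarrow> 'k" assume "a \<in> Acar n"
  then show "Asc c a \<in> Acar n" by (simp add: Acar_iff sc_M fps_const_mult_nth)
next
  fix a b d :: "nat \<Rightarrow> 'k"
  show "Aadd (Aadd a b) d = Aadd a (Aadd b d)" by (simp add: Aadd_def add.assoc)
next
  fix a b :: "nat \<Rightarrow> 'k"
  show "Aadd a b = Aadd b a" by (simp add: Aadd_def add.commute)
next
  fix a :: "nat \<Rightarrow> 'k"
  show "Aadd Azero a = a" by (simp add: Aadd_def Azero_def)
next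
  fix a :: "nat \<Rightarrow> 'k" assume "a \<in> Acar n"
  then have "Asc (-1) a \<in> Acar n" by (simp add: Acar_iff neg_M fps_const_mult_nth)
  moreover have "Aadd a (Asc (-1) a) = Azero" by (simp add: Aadd_def Asc_def Azero_def)
  ultimately show "\<exists>b\<in>Acar n. Aadd a b = Azero" by blast
next
  fix c and a b :: "nat \<Rightarrow> 'k"
  show "Asc c (Aadd a b) = Aadd (Asc c a) (Asc c b)" by (simp add: Aadd_def Asc_def distrib_left)
next
  fix c d and a :: "nat \<Rightarrow> 'k"
  show "Asc (c + d) a = Aadd (Asc c a) (Asc d a)" by (simp add: Aadd_def Asc_def distrib_right)
next
  fix c d and a :: "nat \<Rightarrow> 'k"
  show "Asc (c * d) a = Asc c (Asc d a)" by (simp add: Asc_def mult.assoc)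
next
  fix a :: "nat \<Rightarrow> 'k"
  show "Asc 1 a = a" by (simp add: Asc_def)
next
  fix a b d :: "nat \<Rightarrow> 'k" assume "a \<in> Acar n" "b \<in> Acar n" "d \<in> Acar n"
  then show "Amul n (Amul n a b) d = Amul n a (Amul n b d)" by (rule Amul_assoc)
next
  fix a b d :: "nat \<Rightarrow> 'k"
  show "Amul n a (Aadd b d) = Aadd (Amul n a b) (Amul n a d)" by (rule Amul_distL)
next
  fix a b d :: "nat \<Rightarrow> 'k"
  show "Amul n (Aadd a b) d = Aadd (Amul n a d) (Amul n b d)" by (rule Amul_distR)
next
  fix c and a b :: "nat \<Rightarrow> 'k"
  show "Asc c (Amul n a b) = Amul n (Asc c a) b" using Amul_sc by blast
next
  fix c and a b :: "nat \<Rightarrow> 'k"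
  show "Asc c (Amul n a b) = Amul n a (Asc c b)" using Amul_sc by blast
qed


lemma lprod_Cons: "xs \<noteq> [] \<Longrightarrow> lprod mul (x # xs) = mul x (lprod mul xs)"
  by (cases xs) auto

lemma sg_A: "sg (Acar n) (Amul n)"
  by unfold_locales (auto intro: Amul_in Amul_assoc)

lemma ordge1: "e \<in> Acar n \<Longrightarrow> ordge (fpart e) 1"
  by (simp add: ordge_def Acar_iff)
lemma MA: "e \<in> Acar n \<Longrightarrow> mpart e \<in> Mset (n - 2) (2 * (n - 2))"
  by (simp add: Acar_iff)

lemma fpart_P: "xs \<noteq> [] \<Longrightarrow> set xs \<subseteq> Acar n \<Longrightarrow>
    fpart (lprod (Amul n) xs) = prod_list (map fpart xs)"
proof (induction xs)
  case Nil then show ?case by simp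
next
  case (Cons x xs)
  show ?case
  proof (cases "xs = []")
    case True then show ?thesis by simp
  next
    case False
    then show ?thesis using Cons by (simp add: lprod_Cons)
  qed
qed

lemma ordge_P: "xs \<noteq> [] \<Longrightarrow> set xs \<subseteq> Acar n \<Longrightarrow>
    ordge (fpart (lprod (Amul n) xs)) (length xs)"
proof (induction xs)
  case Nil then show ?case by simp
next
  case (Cons x xs)
  show ?case
  proof (cases "xs = []")
    case True then show ?thesis using Cons ordge1 by simp
  next
    case False
    then have "ordge (fpart x * fpart (lprod (Amul n) xs)) (1 + length xs)"
      using Cons by (intro ordge_mult ordge1) auto
    then show ?thesis using False Cons by (simp add: lprod_Cons)
  qed
qed

lemma KEY:
  assumes "c \<in> Acar n" "d \<in> Acar n" "ordge Q (n - 2)"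
  shows "act (2 * (n - 2)) Q (mpart (Amul n c d)) = act (2 * (n - 2)) Q (mpart (Amul n d c))"
proof -
  let ?T = "2 * (n - 2)"
  have Mc: "mpart c \<in> Mset (n - 2) ?T" and Md: "mpart d \<in> Mset (n - 2) ?T" using assms MA by auto
  have h1: "act ?T Q (act ?T (fpart c) (mpart d)) = act ?T (Q * fpart c) (mpart d)"
    using act_hom[OF Mset_supp[OF Md]] by simp
  have h2: "act ?T Q (ract ?T (fpart d) (mpart c)) = act ?T (Q * fpart d) (mpart c)"
    by (rule Rel2[OF Mc assms(3)])
  have h3: "act ?T Q (act ?T (fpart d) (mpart c)) = act ?T (Q * fpart d) (mpart c)"
    using act_hom[OF Mset_supp[OF Mc]] by simp
  have h4: "act ?T Q (ract ?T (fpart c) (mpart d)) = act ?T (Q * fpart c) (mpart d)"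
    by (rule Rel2[OF Md assms(3)])
  show ?thesis by (simp add: act_add2 h1 h2 h3 h4 add.commute)
qed

lemma A_BI:
  assumes n4: "4 \<le> n" and ab: "a \<in> Acar n" "b \<in> Acar n" "c \<in> Acar n" "d \<in> Acar n"
    and us: "set us \<subseteq> Acar n" "length us = n - 4"
  shows "lprod (Amul n) (a # b # us @ [c, d]) = lprod (Amul n) (b # a # us @ [d, c])"
proof -
  let ?T = "2 * (n - 2)"
  let ?P = "lprod (Amul n)"
  define R where "R = ?P (us @ [c, d])"
  define R' where "R' = ?P (us @ [d, c])"
  have RA: "R \<in> Acar n" "R' \<in> Acar n"
    unfolding R_def R'_def by (rule sg.P_in[OF sg_A], use ab us in auto)+
  have fR: "fpart R' = fpart R"
    unfolding R_def R'_def using fpart_P[of "us @ [c, d]" n] fpart_P[of "us @ [d, c]" n] ab us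
    by (simp add: ac_simps)
  have ordR: "ordge (fpart R) (n - 2)"
  proof -
    have "Suc (Suc (n - 4)) = n - 2" using n4 by simp
    then show ?thesis unfolding R_def using ordge_P[of "us @ [c, d]" n] ab us n4 by simp
  qed
  have oab: "ordge (fpart a * fpart b) 2"
    using ordge_mult[OF ordge1[OF ab(1)] ordge1[OF ab(2)]] by (simp add: numeral_2_eq_2)
  have C: "act ?T (fpart a * fpart b) (mpart R) = act ?T (fpart a * fpart b) (mpart R')"
  proof (cases "us = []")
    case True
    then have "n = 4" using us n4 by simp
    then show ?thesis using True KEY[OF ab(3,4), of "fpart a * fpart b"] oab
      by (simp add: R_def R'_def)
  next
    case False
    define U where "U = ?P us"
    have UA: "U \<in> Acar n" unfolding U_def using sg.P_in[OF sg_A] False us by auto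
    have R1: "R = Amul n U (Amul n c d)" "R' = Amul n U (Amul n d c)"
      unfolding R_def R'_def U_def using sg.P_app[OF sg_A, of us] False us ab by auto
    have oQ: "ordge (fpart a * fpart b * fpart U) (n - 2)"
    proof -
      have "ordge (fpart a * fpart b * fpart U) (2 + length us)"
        unfolding U_def by (rule ordge_mult[OF oab ordge_P]) (use False us in auto)
      moreover have "2 + length us = n - 2" using us n4 by simp
      ultimately show ?thesis by simp
    qed
    have Mcd: "mpart (Amul n c d) \<in> Mset (n - 2) ?T" "mpart (Amul n d c) \<in> Mset (n - 2) ?T"
      using MA Amul_in ab by blast+
    have e1: "act ?T (fpart a * fpart b) (act ?T (fpart U) (mpart (Amul n c d)))
        = act ?T (fpart a * fpart b * fpart U) (mpart (Amul n c d))"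
      using act_hom[OF Mset_supp[OF Mcd(1)]] by simp
    have e2: "act ?T (fpart a * fpart b) (act ?T (fpart U) (mpart (Amul n d c)))
        = act ?T (fpart a * fpart b * fpart U) (mpart (Amul n d c))"
      using act_hom[OF Mset_supp[OF Mcd(2)]] by simp
    have K: "act ?T (fpart a * fpart b * fpart U) (mpart (Amul n c d))
        = act ?T (fpart a * fpart b * fpart U) (mpart (Amul n d c))"
      by (rule KEY[OF ab(3,4) oQ])
    have "mpart R = (\<lambda>x y. act ?T (fpart U) (mpart (Amul n c d)) x y + ract ?T (fpart c * fpart d) (mpart U) x y)"
      using R1 by simp
    moreover have "mpart R' = (\<lambda>x y. act ?T (fpart U) (mpart (Amul n d c)) x y + ract ?T (fpart c * fpart d) (mpart U) x y)"
      using R1 by (simp add: mult.commute)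
    ultimately show ?thesis by (simp only: act_add2 e1 e2 K)
  qed
  have L: "?P (a # b # us @ [c, d]) = Amul n a (Amul n b R)"
    unfolding R_def by (simp add: lprod_Cons)
  have Rr: "?P (b # a # us @ [d, c]) = Amul n b (Amul n a R')"
    unfolding R'_def by (simp add: lprod_Cons)
  have Ma: "mpart a \<in> Mset (n - 2) ?T" and Mb: "mpart b \<in> Mset (n - 2) ?T"
    and MR: "mpart R \<in> Mset (n - 2) ?T" and MR': "mpart R' \<in> Mset (n - 2) ?T"
    using MA ab RA by auto
  have t1: "act ?T (fpart a) (act ?T (fpart b) (mpart R)) = act ?T (fpart a * fpart b) (mpart R)"
    using act_hom[OF Mset_supp[OF MR]] by simp
  have t2: "act ?T (fpart b) (act ?T (fpart a) (mpart R')) = act ?T (fpart a * fpart b) (mpart R')"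
    using act_hom[OF Mset_supp[OF MR'], of "fpart b" "fpart a"] by (simp add: mult.commute)
  have t3: "act ?T (fpart a) (ract ?T (fpart R) (mpart b)) = ract ?T (fpart a * fpart R) (mpart b)"
    by (rule Rel1[OF Mb ordR])
  have t4: "act ?T (fpart b) (ract ?T (fpart R) (mpart a)) = ract ?T (fpart b * fpart R) (mpart a)"
    by (rule Rel1[OF Ma ordR])
  show ?thesis
  proof (rule ext_parts)
    show "fpart (?P (a # b # us @ [c, d])) = fpart (?P (b # a # us @ [d, c]))"
      unfolding L Rr using fR by (simp add: mult.left_commute)
    show "mpart (?P (a # b # us @ [c, d])) = mpart (?P (b # a # us @ [d, c]))"
      unfolding L Rr using fR by (simp add: act_add2 t1 t2 t3 t4 C add_ac)
  qed
qed

lemma A_sat: "4 \<le> n \<Longrightarrow> satisfies_identity (Acar n :: (nat \<Rightarrow> 'k::field) set) (Amul n) n (sigma_perm n)"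
proof (rule BI_sat)
  assume n4: "4 \<le> n"
  then show "4 \<le> n" .
  fix a b c d :: "nat \<Rightarrow> 'k" and us :: "(nat \<Rightarrow> 'k) list"
  assume "a \<in> Acar n" "b \<in> Acar n" "c \<in> Acar n" "d \<in> Acar n" "set us \<subseteq> Acar n" "length us = n - 4"
  then show "lprod (Amul n) (a # b # us @ [c, d]) = lprod (Amul n) (b # a # us @ [d, c])"
    using A_BI[OF n4] by blast
qed


lemma act_X_pow: "p \<le> T \<Longrightarrow> act T (fps_X ^ p) \<psi> a b = \<psi> (a + p) b"
  by (simp add: act_def mult_delta_left sum.delta)
lemma ract_X_pow: "q \<le> T \<Longrightarrow> ract T (fps_X ^ q) \<psi> a b = \<psi> a (b + q)"
  by (simp add: ract_def mult_delta_left sum.delta)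

lemma act_X_pow': "Suc p \<le> T \<Longrightarrow> act T (fps_X * fps_X ^ p) \<psi> a b = \<psi> (a + Suc p) b"
  using act_X_pow[of "Suc p" T \<psi> a b] by simp
lemma ract_X_pow': "Suc q \<le> T \<Longrightarrow> ract T (fps_X * fps_X ^ q) \<psi> a b = \<psi> a (b + Suc q)"
  using ract_X_pow[of "Suc q" T \<psi> a b] by simp

lemma nth_rep: "i < p + 1 + q \<Longrightarrow> (replicate p x @ y # replicate q x) ! i = (if i = p then y else x)"
  by (auto simp: nth_append nth_Cons split: nat.split)

lemma noncomm:
  assumes n4: "4 \<le> n" and k: "2 \<le> k" "k < 2 * n - 3"
  shows "\<not> eventually_commutative (Acar n :: (nat \<Rightarrow> 'k::field) set) (Amul n) k"
proof -
  let ?T = "2 * (n - 2)"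
  let ?P = "lprod (Amul n)"
  define a0 where "a0 = (k - 2) div 2"
  define b0 where "b0 = k - 2 - a0"
  have a0b0': "a0 < n - 2 \<and> b0 < n - 2 \<and> a0 + b0 + 2 = k"
  proof -
    have e: "(k - 2) div 2 * 2 + (k - 2) mod 2 = k - 2" by (rule div_mult_mod_eq)
    have r: "(k - 2) mod 2 < 2" by simp
    show ?thesis using e r n4 k unfolding a0_def b0_def by linarith
  qed
  then have a0b0: "a0 < n - 2" "b0 < n - 2" "a0 + b0 + 2 = k" by auto
  define \<phi>0 :: "nat \<Rightarrow> nat \<Rightarrow> 'k" where
    "\<phi>0 = (\<lambda>a b. if a \<le> a0 \<and> a + b = a0 + b0 + 1 then 1 else 0)"
  define X :: "nat \<Rightarrow> 'k" where "X = mk fps_X (\<lambda>a b. 0)"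
  define Y :: "nat \<Rightarrow> 'k" where "Y = mk 0 \<phi>0"
  have M0: "\<phi>0 \<in> Mset (n - 2) ?T"
    unfolding Mset_def supp_def
  proof (intro CollectI conjI allI impI)
    fix a b assume "?T < a + b"
    then show "\<phi>0 a b = 0" using a0b0 by (auto simp: \<phi>0_def)
  next
    fix a b assume h: "n - 2 \<le> a \<or> n - 2 \<le> b"
    show "\<phi>0 (Suc a) b = \<phi>0 a (Suc b)"
    proof (cases "a = a0 \<and> a + b + 1 = a0 + b0 + 1")
      case True then show ?thesis using h a0b0 by auto
    next
      case False then show ?thesis by (auto simp: \<phi>0_def)
    qed
  qed
  have XA: "X \<in> Acar n" unfolding X_def by (simp add: Acar_iff zero_M)
  have YA: "Y \<in> Acar n" unfolding Y_def using M0 by (simp add: Acar_iff)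
  have PX: "?P (replicate (Suc p) X) = mk (fps_X ^ Suc p) (\<lambda>a b. 0)" for p
  proof (induction p)
    case 0 then show ?case by (simp add: X_def)
  next
    case (Suc p)
    have "?P (replicate (Suc (Suc p)) X) = ?P (X # replicate (Suc p) X)"
      by (simp only: replicate_Suc)
    also have "\<dots> = Amul n X (?P (replicate (Suc p) X))"
      by (rule lprod_Cons) simp
    also have "\<dots> = mk (fps_X ^ Suc (Suc p)) (\<lambda>a b. 0)"
      unfolding Suc by (rule ext_parts) (simp_all add: X_def)
    finally show ?case .
  qed
  have PY: "?P (Y # replicate q X) = mk 0 (ract ?T (fps_X ^ q) \<phi>0)" for q
  proof (cases q)
    case 0 then show ?thesis by (simp add: Y_def)
  next
    case (Suc p)
    then have "?P (Y # replicate q X) = Amul n Y (mk (fps_X ^ Suc p) (\<lambda>a b. 0))"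
      using PX by (simp add: lprod_Cons del: replicate.simps)
    also have "\<dots> = mk 0 (ract ?T (fps_X ^ q) \<phi>0)"
      using Suc by (intro ext_parts) (simp_all add: Y_def)
    finally show ?thesis .
  qed
  have sY: "supp ?T (ract ?T (fps_X ^ q) \<phi>0)" for q
    by (rule ract_supp[OF Mset_supp[OF M0]])
  have PXY: "?P (replicate p X @ Y # replicate q X) = mk 0 (act ?T (fps_X ^ p) (ract ?T (fps_X ^ q) \<phi>0))" for p q
  proof (induction p)
    case 0 then show ?case using PY by simp
  next
    case (Suc p)
    have "?P (replicate (Suc p) X @ Y # replicate q X) = Amul n X (?P (replicate p X @ Y # replicate q X))"
      by (simp add: lprod_Cons)
    also have "\<dots> = mk 0 (act ?T (fps_X ^ Suc p) (ract ?T (fps_X ^ q) \<phi>0))"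
      unfolding Suc
      by (rule ext_parts) (simp_all add: X_def act_hom[OF sY])
    finally show ?case .
  qed
  define x where "x i = (if i = a0 + 2 then Y else X)" for i
  define \<tau> where "\<tau> = transpose (a0 + 1) (a0 + 2)"
  have tp: "\<tau> permutes {1..k}" unfolding \<tau>_def
    by (rule permutes_swap_id) (use a0b0 in auto)
  have w1: "map x [1..<k+1] = replicate (a0 + 1) X @ Y # replicate b0 X"
  proof (rule nth_equalityI)
    show "length (map x [1..<k+1]) = length (replicate (a0 + 1) X @ Y # replicate b0 X)"
      using a0b0 by simp
    fix i assume "i < length (map x [1..<k+1])"
    then have i: "i < k" by (simp del: upt.simps)
    then have "(replicate (a0 + 1) X @ Y # replicate b0 X) ! i = (if i = a0 + 1 then Y else X)"
      using a0b0 by (intro nth_rep) simp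
    then show "map x [1..<k+1] ! i = (replicate (a0 + 1) X @ Y # replicate b0 X) ! i"
      using i by (simp add: x_def del: upt.simps)
  qed
  have w2: "map (\<lambda>i. x (\<tau> i)) [1..<k+1] = replicate a0 X @ Y # replicate (b0 + 1) X"
  proof (rule nth_equalityI)
    show "length (map (\<lambda>i. x (\<tau> i)) [1..<k+1]) = length (replicate a0 X @ Y # replicate (b0 + 1) X)"
      using a0b0 by simp
    fix i assume "i < length (map (\<lambda>i. x (\<tau> i)) [1..<k+1])"
    then have i: "i < k" by (simp del: upt.simps)
    then have "(replicate a0 X @ Y # replicate (b0 + 1) X) ! i = (if i = a0 then Y else X)"
      using a0b0 by (intro nth_rep) simp
    moreover have "(\<tau> (Suc i) = a0 + 2) \<longleftrightarrow> i = a0"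
      unfolding \<tau>_def by (auto simp: transpose_def)
    ultimately show "map (\<lambda>i. x (\<tau> i)) [1..<k+1] ! i = (replicate a0 X @ Y # replicate (b0 + 1) X) ! i"
      using i by (simp add: x_def del: upt.simps)
  qed
  have v1: "mpart (?P (map x [1..<k+1])) 0 0 = 0"
  proof -
    have "mpart (?P (map x [1..<k+1])) 0 0 = \<phi>0 (a0 + 1) b0"
      unfolding w1 PXY using a0b0 by (simp add: act_X_pow ract_X_pow act_X_pow' ract_X_pow')
    then show ?thesis by (simp add: \<phi>0_def)
  qed
  have v2: "mpart (?P (map (\<lambda>i. x (\<tau> i)) [1..<k+1])) 0 0 = 1"
  proof -
    have "mpart (?P (map (\<lambda>i. x (\<tau> i)) [1..<k+1])) 0 0 = \<phi>0 a0 (b0 + 1)"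
      unfolding w2 PXY using a0b0 by (simp add: act_X_pow ract_X_pow act_X_pow' ract_X_pow')
    then show ?thesis by (simp add: \<phi>0_def)
  qed
  have xA: "\<forall>i\<in>{1..k}. x i \<in> Acar n" using XA YA by (simp add: x_def)
  have "\<not> satisfies_identity (Acar n :: (nat \<Rightarrow> 'k) set) (Amul n) k \<tau>"
  proof
    assume "satisfies_identity (Acar n :: (nat \<Rightarrow> 'k) set) (Amul n) k \<tau>"
    then have "?P (map x [1..<k+1]) = ?P (map (\<lambda>i. x (\<tau> i)) [1..<k+1])"
      using xA unfolding satisfies_identity_def by blast
    then show False using v1 v2 by simp
  qed
  then show ?thesis using tp unfolding eventually_commutative_def by blast
qed

theorem theorem2p17:
  fixes n :: nat
  assumes "n \<ge> 4"
  shows "(\<forall>(A :: 'a set) add zero (sc :: 'k::field \<Rightarrow> 'a \<Rightarrow> 'a) mul.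
            is_assoc_algebra A add zero sc mul \<and> satisfies_identity A mul n (sigma_perm n)
            \<longrightarrow> eventually_commutative A mul (2 * n - 3))
       \<and> (\<exists>(A :: (nat \<Rightarrow> 'k) set) add zero (sc :: 'k \<Rightarrow> (nat \<Rightarrow> 'k) \<Rightarrow> (nat \<Rightarrow> 'k)) mul.
            is_assoc_algebra A add zero sc mul \<and> satisfies_identity A mul n (sigma_perm n) \<and>
            (\<forall>k. 2 \<le> k \<and> k < 2 * n - 3 \<longrightarrow> \<not> eventually_commutative A mul k))"
proof (intro conjI allI impI)
  fix A :: "'a set" and add zero and sc :: "'k \<Rightarrow> 'a \<Rightarrow> 'a" and mul
  assume h: "is_assoc_algebra A add zero sc mul \<and> satisfies_identity A mul n (sigma_perm n)"
  interpret sg A mul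
    using h by unfold_locales (auto simp: is_assoc_algebra_def)
  interpret sgid A mul n
  proof unfold_locales
    show "4 \<le> n" using assms .
    fix a b c d us assume "a \<in> A" "b \<in> A" "c \<in> A" "d \<in> A" "set us \<subseteq> A" "length us = n - 4"
    then show "lprod mul (a # b # us @ [c, d]) = lprod mul (b # a # us @ [d, c])"
      using sat_BI[of A mul n] h assms by blast
  qed
  show "eventually_commutative A mul (2 * n - 3)" by (rule evc)
next
  show "\<exists>(A :: (nat \<Rightarrow> 'k) set) add zero (sc :: 'k \<Rightarrow> (nat \<Rightarrow> 'k) \<Rightarrow> (nat \<Rightarrow> 'k)) mul.
            is_assoc_algebra A add zero sc mul \<and> satisfies_identity A mul n (sigma_perm n) \<and>
            (\<forall>k. 2 \<le> k \<and> k < 2 * n - 3 \<longrightarrow> \<not> eventually_commutative A mul k)"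
    using Acar_alg[of n] A_sat[OF assms] noncomm[OF assms] by blast
qed


end
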